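(* Let $m\ge1$ be an integer and let $p=e^{-X}$ where $X$ has the gamma distribution with shape $m+1$ and rate $1$ (equivalently $p$ has density $\pi(p)=(-\log p)^m/m!$ on $(0,1)$). Conditionally on $p$, let $X_1,X_2,\dots$ be i.i.d. with $P(X_i=j\mid p)=p(1-p)^{j-1}$, $j=1,2,\dots$, let $K_n$ be the number of distinct values among $X_1,\dots,X_n$, and define $$\overrightarrow\nu(x)=\int_0^1\#\{j\ge1:\ p(1-p)^{j-1}\ge x\}\,\pi(p)\,dp,\qquad x\in(0,1).$$ Then $$\overrightarrow\nu(x)=\frac{(\log 1/x)^{m+2}}{(m+2)!}+O\big((\log x)^m\big),\qquad x\to0,$$ and $$\mathrm{E}(K_n)=\frac{(\log n)^{m+2}}{(m+2)!}+\gamma\frac{(\log n)^{m+1}}{(m+1)!}+o\big((\log n)^{m+1}\big),\qquad n\to\infty,$$ where $\gamma$ is the Euler–Mascheroni constant.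
   Context: $\mathrm{E}(K_n)$ is the unconditional expectation (averaging over $p$ and the draws). *)

theory Defs
  imports "HOL-Probability.Probability" "HOL-Library.Landau_Symbols"
begin

definition pi_dens :: "nat \<Rightarrow> real \<Rightarrow> real" where
  "pi_dens m p = (- ln p) ^ m / fact m"

text \<open>Law of X_i given p: P(X_i = j | p) = p (1-p)^(j-1), j = 1,2,...\<close>
definition geom1_pmf :: "real \<Rightarrow> nat pmf" where
  "geom1_pmf p = map_pmf Suc (geometric_pmf p)"

definition EK_cond :: "nat \<Rightarrow> real \<Rightarrow> real" where
  "EK_cond n p = measure_pmf.expectation (replicate_pmf n (geom1_pmf p))
                   (\<lambda>xs. real (card (set xs)))"

definition EK :: "nat \<Rightarrow> nat \<Rightarrow> real" where
  "EK m n = (LINT p:{0<..<1}|lborel. EK_cond n p * pi_dens m p)"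

definition nu_arrow :: "nat \<Rightarrow> real \<Rightarrow> real" where
  "nu_arrow m x = (LINT p:{0<..<1}|lborel.
      real (card {j::nat. j \<ge> 1 \<and> p * (1 - p) ^ (j - 1) \<ge> x}) * pi_dens m p)"

end

theory Submission
  imports Defs "HOL-Analysis.Harmonic_Numbers"
begin

lemma pow_diff_bounds:
  fixes a b :: real
  assumes "0 \<le> b" "b \<le> a" "r \<ge> 1"
  shows "real r * (a - b) * b ^ (r - 1) \<le> a ^ r - b ^ r"
    and "a ^ r - b ^ r \<le> real r * (a - b) * a ^ (r - 1)"
proof -
  have eq: "a ^ r - b ^ r = (a - b) * (\<Sum>i<r. b ^ (r - Suc i) * a ^ i)"
    by (rule power_diff_sumr2)
  have lo: "b ^ (r - 1) \<le> b ^ (r - Suc i) * a ^ i" if "i < r" for i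
  proof -
    have "b ^ (r - 1) = b ^ (r - Suc i) * b ^ i"
      using that by (simp add: power_add[symmetric])
    also have "\<dots> \<le> b ^ (r - Suc i) * a ^ i"
      using assms by (intro mult_left_mono power_mono) auto
    finally show ?thesis .
  qed
  have hi: "b ^ (r - Suc i) * a ^ i \<le> a ^ (r - 1)" if "i < r" for i
  proof -
    have "b ^ (r - Suc i) * a ^ i \<le> a ^ (r - Suc i) * a ^ i"
      using assms by (intro mult_right_mono power_mono) auto
    also have "\<dots> = a ^ (r - 1)"
      using that by (simp add: power_add[symmetric])
    finally show ?thesis .
  qed
  have s1: "real r * b ^ (r - 1) \<le> (\<Sum>i<r. b ^ (r - Suc i) * a ^ i)"
    using sum_mono[of "{..<r}" "\<lambda>_. b ^ (r - 1)" "\<lambda>i. b ^ (r - Suc i) * a ^ i"] lo by simp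
  have s2: "(\<Sum>i<r. b ^ (r - Suc i) * a ^ i) \<le> real r * a ^ (r - 1)"
    using sum_mono[of "{..<r}" "\<lambda>i. b ^ (r - Suc i) * a ^ i" "\<lambda>_. a ^ (r - 1)"] hi by simp
  have ab: "0 \<le> a - b" using assms by simp
  show "real r * (a - b) * b ^ (r - 1) \<le> a ^ r - b ^ r"
    unfolding eq using mult_left_mono[OF s1 ab] by (simp add: algebra_simps)
  show "a ^ r - b ^ r \<le> real r * (a - b) * a ^ (r - 1)"
    unfolding eq using mult_left_mono[OF s2 ab] by (simp add: algebra_simps)
qed

lemma telescope_bound:
  fixes x h :: real
  assumes "0 \<le> h" "h \<le> x" "K \<ge> 2"
  shows "0 \<le> real K * x ^ (K - 1) * h - (x ^ K - (x - h) ^ K)"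
    and "real K * x ^ (K - 1) * h - (x ^ K - (x - h) ^ K) \<le> real K ^ 2 * x ^ (K - 2) * h ^ 2"
proof -
  have b1: "real K * (x - (x - h)) * (x - h) ^ (K - 1) \<le> x ^ K - (x - h) ^ K"
   and b2: "x ^ K - (x - h) ^ K \<le> real K * (x - (x - h)) * x ^ (K - 1)"
    using pow_diff_bounds[of "x - h" x K] assms by auto
  have b3: "x ^ (K - 1) - (x - h) ^ (K - 1) \<le> real (K - 1) * (x - (x - h)) * x ^ (K - 1 - 1)"
    using pow_diff_bounds[of "x - h" x "K - 1"] assms by auto
  show "0 \<le> real K * x ^ (K - 1) * h - (x ^ K - (x - h) ^ K)" using b2 by (simp add: mult_ac)
  have "real K * x ^ (K - 1) * h - (x ^ K - (x - h) ^ K)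
        \<le> real K * h * (x ^ (K - 1) - (x - h) ^ (K - 1))"
    using b1 by (simp add: algebra_simps)
  also have "\<dots> \<le> real K * h * (real (K - 1) * h * x ^ (K - 2))"
    using b3 assms by (intro mult_left_mono) (auto simp: numeral_2_eq_2)
  also have "\<dots> \<le> real K * h * (real K * h * x ^ (K - 2))"
    using assms by (intro mult_left_mono mult_right_mono) auto
  finally show "real K * x ^ (K - 1) * h - (x ^ K - (x - h) ^ K) \<le> real K ^ 2 * x ^ (K - 2) * h ^ 2"
    by (simp add: power2_eq_square algebra_simps)
qed

lemma sum_inv_sq_le: "(\<Sum>j=1..n. 1 / (real j)^2) \<le> 2 - 1 / real (max n 1)"
proof (induction n)
  case 0 then show ?case by simp
next
  case (Suc n)
  show ?case
  proof (cases "n = 0")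
    case True then show ?thesis by simp
  next
    case False
    have "(\<Sum>j=1..Suc n. 1 / (real j)^2) = (\<Sum>j=1..n. 1 / (real j)^2) + 1 / (real (Suc n))^2"
      by simp
    also have "\<dots> \<le> 2 - 1 / real n + 1 / (real (Suc n))^2"
      using Suc False by simp
    also have "\<dots> \<le> 2 - 1 / real (Suc n)"
    proof -
      have n: "real n \<ge> 1" using False by simp
      have e: "1 / real n - 1 / real (Suc n) = 1 / (real n * real (Suc n))"
        using n by (simp add: field_simps)
      have "1 / (real (Suc n))^2 \<le> 1 / (real n * real (Suc n))"
        unfolding power2_eq_square using n by (intro frac_le) auto
      then have "1 / (real (Suc n))^2 \<le> 1 / real n - 1 / real (Suc n)" using e by simp
      then show ?thesis by simp
    qed
    finally show ?thesis by simp
  qed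
qed

lemma sum_inv_sq_le2: "(\<Sum>j=1..n. 1 / (real j)^2) \<le> 2"
  using sum_inv_sq_le[of n] by (smt (verit) divide_nonneg_nonneg of_nat_0_le_iff)

fun Aseq :: "nat \<Rightarrow> nat \<Rightarrow> real" where
  "Aseq 0 n = 1"
| "Aseq (Suc k) n = (\<Sum>j=1..n. Aseq k j / real j)"

lemma Aseq_1: "Aseq 1 n = harm n"
  by (simp add: harm_def divide_inverse)

lemma Aseq_nonneg: "Aseq k n \<ge> 0"
  by (induction k arbitrary: n) (auto intro!: sum_nonneg)

lemma sum_shift1: "(\<Sum>j=1..n. f j) = (\<Sum>j<n. f (Suc j) :: real)"
  by (induction n) auto

lemma harm_ge_inv: "harm (Suc j) \<ge> (1 / real (Suc j) :: real)"
  by (simp add: harm_Suc harm_nonneg divide_inverse)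

lemma Aseq_step:
  assumes k: "k \<ge> 1" and b: "\<And>j. j \<le> n \<Longrightarrow> \<bar>Aseq k j - harm j ^ k / fact k\<bar> \<le> b"
  shows "\<bar>Aseq (Suc k) n - harm n ^ Suc k / fact (Suc k)\<bar>
          \<le> b * harm n + 2 * real (Suc k)^2 * (1 + harm n) ^ (k - 1)"
proof -
  define K where "K = Suc k"
  define E where "E n = Aseq K n - harm n ^ K / fact K" for n
  define D where "D = real K ^ 2 * (1 + harm n) ^ (k - 1)"
  have b0: "b \<ge> 0" using b[of 0] by simp
  have E0: "E 0 = 0" by (simp add: E_def K_def harm_def)
  have tel: "E n = (\<Sum>j<n. E (Suc j) - E j)"
    using sum_lessThan_telescope[of E n] E0 by simp
  have step: "\<bar>E (Suc j) - E j\<bar> \<le> b * (1 / real (Suc j)) + D * (1 / real (Suc j))^2"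
    if j: "j < n" for j
  proof -
    define x :: real where "x = harm (Suc j)"
    define h where "h = 1 / real (Suc j)"
    have hx: "harm j = x - h" by (simp add: x_def h_def harm_Suc divide_inverse)
    have h0: "0 \<le> h" by (simp add: h_def)
    have hle: "h \<le> x" using harm_ge_inv[of j] by (simp add: x_def h_def)
    have K2: "K \<ge> 2" using k by (simp add: K_def)
    have fK: "fact K = real K * fact k" by (simp add: K_def)
    have ASuc: "Aseq K (Suc j) = Aseq K j + Aseq k (Suc j) * h"
      by (simp add: K_def h_def divide_inverse)
    have diff: "E (Suc j) - E j = (Aseq k (Suc j) - x ^ k / fact k) * h
               + (real K * x ^ (K - 1) * h - (x ^ K - (x - h) ^ K)) / fact K"
    proof -
      have K1: "K - 1 = k" by (simp add: K_def)
      have fk0: "fact k \<noteq> (0::real)" by simp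
      have "E (Suc j) - E j = Aseq k (Suc j) * h - x ^ K / fact K + (x - h) ^ K / fact K"
        unfolding E_def ASuc x_def[symmetric] hx by simp
      also have "\<dots> = (Aseq k (Suc j) - x ^ k / fact k) * h
               + (real K * x ^ (K - 1) * h - (x ^ K - (x - h) ^ K)) / fact K"
      proof -
        have e: "x ^ k / fact k = real K * x ^ k / fact K" using fK fk0 by (simp add: K_def)
        show ?thesis unfolding K1 e by (simp add: field_simps)
      qed
      finally show ?thesis .
    qed
    have t1: "\<bar>(Aseq k (Suc j) - x ^ k / fact k) * h\<bar> \<le> b * h"
      using b[of "Suc j"] j h0 by (simp add: abs_mult x_def mult_right_mono)
    note tb1 = telescope_bound(1)[OF h0 hle K2]
    note tb2 = telescope_bound(2)[OF h0 hle K2]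
    have xle: "x ^ (K - 2) \<le> (1 + harm n) ^ (k - 1)"
    proof -
      have "x \<le> 1 + harm n" using harm_mono[of "Suc j" n, where 'a=real] j unfolding x_def by (simp add: Suc_le_eq)
      moreover have "0 \<le> x" by (simp add: x_def harm_nonneg)
      ultimately show ?thesis by (simp add: K_def power_mono)
    qed
    have fK1: "fact K \<ge> (1::real)" by simp
    have t2: "\<bar>(real K * x ^ (K - 1) * h - (x ^ K - (x - h) ^ K)) / fact K\<bar> \<le> D * h ^ 2"
    proof -
      have "\<bar>(real K * x ^ (K - 1) * h - (x ^ K - (x - h) ^ K)) / fact K\<bar>
            = (real K * x ^ (K - 1) * h - (x ^ K - (x - h) ^ K)) / fact K"
        using tb1 by simp
      also have "\<dots> \<le> real K * x ^ (K - 1) * h - (x ^ K - (x - h) ^ K)"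
        using tb1 fK1 by (simp add: divide_le_eq mult_le_cancel_left1 order_trans[OF _ mult_right_mono[OF fK1]] ) 
      also have "\<dots> \<le> real K ^ 2 * x ^ (K - 2) * h ^ 2" by (rule tb2)
      also have "\<dots> \<le> D * h ^ 2" unfolding D_def
        using xle by (intro mult_right_mono mult_left_mono) auto
      finally show ?thesis .
    qed
    have "\<bar>E (Suc j) - E j\<bar> \<le> b * h + D * h ^ 2"
      unfolding diff by (rule order_trans[OF abs_triangle_ineq add_mono[OF t1 t2]])
    then show ?thesis unfolding h_def .
  qed
  have "\<bar>E n\<bar> \<le> (\<Sum>j<n. \<bar>E (Suc j) - E j\<bar>)" unfolding tel by (rule sum_abs)
  also have "\<dots> \<le> (\<Sum>j<n. b * (1 / real (Suc j)) + D * (1 / real (Suc j))^2)"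
    by (intro sum_mono step) auto
  also have "\<dots> = b * harm n + D * (\<Sum>j<n. (1 / real (Suc j))^2)"
    by (simp add: sum.distrib sum_distrib_left harm_altdef divide_inverse)
  also have "(\<Sum>j<n. (1 / real (Suc j))^2) \<le> 2"
    using sum_inv_sq_le2[of n] sum_shift1[of "\<lambda>j. 1 / (real j)^2" n] by (simp add: power_divide)
  then have "D * (\<Sum>j<n. (1 / real (Suc j))^2) \<le> D * 2"
    by (intro mult_left_mono) (auto simp: D_def harm_nonneg)
  finally show ?thesis by (simp add: E_def K_def D_def mult_ac)
qed

lemma Aseq_bound:
  assumes "k \<ge> 2"
  shows "\<exists>C\<ge>0. \<forall>n. \<bar>Aseq k n - harm n ^ k / fact k\<bar> \<le> C * (1 + harm n) ^ (k - 2)"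
  using assms
proof (induction k rule: nat_induct_at_least)
  case base
  have "\<bar>Aseq (Suc 1) n - harm n ^ Suc 1 / fact (Suc 1)\<bar>
          \<le> 0 * harm n + 2 * real (Suc 1)^2 * (1 + harm n) ^ (1 - 1)" for n
    by (rule Aseq_step) (auto simp: Aseq_1[simplified])
  then show ?case by (intro exI[of _ 8]) (auto simp: numeral_2_eq_2)
next
  case (Suc k)
  then obtain C where C: "C \<ge> 0" "\<And>n. \<bar>Aseq k n - harm n ^ k / fact k\<bar> \<le> C * (1 + harm n) ^ (k - 2)"
    by auto
  have "\<bar>Aseq (Suc k) n - harm n ^ Suc k / fact (Suc k)\<bar>
        \<le> (C + 2 * real (Suc k)^2) * (1 + harm n) ^ (Suc k - 2)" for n
  proof -
    have H0: "(0::real) \<le> harm n" by (rule harm_nonneg)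
    have b: "\<bar>Aseq k j - harm j ^ k / fact k\<bar> \<le> C * (1 + harm n) ^ (k - 2)" if "j \<le> n" for j
    proof -
      have "(1 + harm j) ^ (k - 2) \<le> (1 + harm n :: real) ^ (k - 2)"
        using harm_mono[OF that, where 'a=real] harm_nonneg[of j, where 'a=real]
        by (intro power_mono) auto
      then show ?thesis using C(2)[of j] C(1) by (smt (verit) mult_left_mono)
    qed
    have "\<bar>Aseq (Suc k) n - harm n ^ Suc k / fact (Suc k)\<bar>
          \<le> C * (1 + harm n) ^ (k - 2) * harm n + 2 * real (Suc k)^2 * (1 + harm n) ^ (k - 1)"
      using Suc.hyps by (intro Aseq_step b) auto
    also have "C * (1 + harm n) ^ (k - 2) * harm n \<le> C * (1 + harm n) ^ (k - 1)"
    proof -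
      have "(1 + harm n) ^ (k - 2) * harm n \<le> (1 + harm n) ^ (k - 2) * (1 + harm n :: real)"
        using H0 by (intro mult_left_mono) auto
      also have "\<dots> = (1 + harm n) ^ (k - 1)"
      proof -
        have "k - 1 = Suc (k - 2)" using Suc.hyps by simp
        then show ?thesis by (simp only: power_Suc2)
      qed
      finally show ?thesis using C(1) by (simp add: mult.assoc mult_left_mono)
    qed
    finally show ?thesis by (simp add: algebra_simps)
  qed
  then show ?case using C(1) by (intro exI[of _ "C + 2 * real (Suc k)^2"]) auto
qed

lemma ln_at_top_nat: "filterlim (\<lambda>n::nat. ln (real n)) at_top sequentially"
  by (intro filterlim_compose[OF ln_at_top] filterlim_real_sequentially)

lemma inv_ln_0: "(\<lambda>n::nat. 1 / ln (real n)) \<longlonglongrightarrow> 0"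
  using tendsto_inverse_0_at_top[OF ln_at_top_nat] by (simp add: divide_inverse)

lemma HL_lim: "(\<lambda>n::nat. (harm n - ln (real n)) :: real) \<longlonglongrightarrow> euler_mascheroni"
  by (rule euler_mascheroni_LIMSEQ)

lemma ev_L_pos: "eventually (\<lambda>n::nat. ln (real n) > 1) sequentially"
  using ln_at_top_nat by (simp add: filterlim_at_top_dense)

lemma ratio_H_L: "(\<lambda>n::nat. (c + harm n) / ln (real n) :: real) \<longlonglongrightarrow> 1"
proof -
  have "(\<lambda>n::nat. 1 + (c + (harm n - ln (real n))) * (1 / ln (real n)) :: real) \<longlonglongrightarrow> 1 + (c + euler_mascheroni) * 0"
    by (intro tendsto_intros HL_lim inv_ln_0)
  then have "(\<lambda>n::nat. 1 + (c + (harm n - ln (real n))) * (1 / ln (real n)) :: real) \<longlonglongrightarrow> 1" by simp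
  then show ?thesis
  proof (rule Lim_transform_eventually)
    show "\<forall>\<^sub>F n in sequentially. 1 + (c + (harm n - ln (real n))) * (1 / ln (real n)) = (c + harm n) / ln (real n)"
      using ev_L_pos by eventually_elim (simp add: field_simps)
  qed
qed

lemma alg_id:
  fixes f A Hk Lk P F F1 K g :: real
  assumes "F = K * F1" "P \<noteq> 0" "F1 \<noteq> 0" "K \<noteq> 0"
  shows "(f - A) / P + (A - Hk / F) / P + ((Hk - Lk) / P - K * g) / F = (f - Lk / F - g * P / F1) / P"
  using assms by (simp add: field_simps)

lemma final_asymp:
  fixes f :: "nat \<Rightarrow> real"
  assumes k: "k \<ge> 3"
    and lo: "eventually (\<lambda>n. Aseq k n - harm n \<le> f n) sequentially"
    and hi: "eventually (\<lambda>n. f n \<le> Aseq k n + 1) sequentially"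
  shows "(\<lambda>n. f n - ln (real n) ^ k / fact k - euler_mascheroni * ln (real n) ^ (k - 1) / fact (k - 1))
           \<in> o(\<lambda>n. ln (real n) ^ (k - 1))"
proof (rule smalloI_tendsto)
  define L where "L n = ln (real n)" for n :: nat
  define H :: "nat \<Rightarrow> real" where "H n = harm n" for n
  obtain C where C: "C \<ge> 0" "\<And>n. \<bar>Aseq k n - H n ^ k / fact k\<bar> \<le> C * (1 + H n) ^ (k - 2)"
    using Aseq_bound[of k] k unfolding H_def by auto
  have Lpos: "eventually (\<lambda>n. L n > 1) sequentially" using ev_L_pos unfolding L_def .
  show "\<forall>\<^sub>F n in sequentially. ln (real n) ^ (k - 1) \<noteq> 0"
    using ev_L_pos by eventually_elim simp
  have r1: "(\<lambda>n. (1 + H n) / L n) \<longlonglongrightarrow> 1" using ratio_H_L[of 1] unfolding H_def L_def .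
  have r0: "(\<lambda>n. (0 + H n) / L n) \<longlonglongrightarrow> 1" using ratio_H_L[of 0] unfolding H_def L_def .
  have iL: "(\<lambda>n. 1 / L n) \<longlonglongrightarrow> 0" using inv_ln_0 unfolding L_def .
  have HL: "(\<lambda>n. H n - L n) \<longlonglongrightarrow> euler_mascheroni" using HL_lim unfolding H_def L_def .
  have t1: "(\<lambda>n. (f n - Aseq k n) / L n ^ (k - 1)) \<longlonglongrightarrow> 0"
  proof (rule Lim_null_comparison)
    show "\<forall>\<^sub>F n in sequentially. norm ((f n - Aseq k n) / L n ^ (k - 1)) \<le> ((1 + H n) / L n) * (1 / L n) ^ (k - 2)"
      using lo hi Lpos
    proof eventually_elim
      case (elim n)
      have H0: "0 \<le> H n" by (simp add: H_def harm_nonneg)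
      have "\<bar>f n - Aseq k n\<bar> \<le> 1 + H n" using elim H0 by (auto simp: H_def)
      then have "\<bar>f n - Aseq k n\<bar> / L n ^ (k - 1) \<le> (1 + H n) / L n ^ (k - 1)"
        using elim by (intro divide_right_mono) auto
      also have "\<dots> = ((1 + H n) / L n) * (1 / L n) ^ (k - 2)"
      proof -
        have "k - 1 = Suc (k - 2)" using k by simp
        then show ?thesis using elim by (simp add: power_one_over field_simps)
      qed
      moreover have "\<bar>L n ^ (k - 1)\<bar> = L n ^ (k - 1)" using elim by simp
      ultimately show ?case by (simp add: abs_divide)
    qed
    have "(\<lambda>n. ((1 + H n) / L n) * (1 / L n) ^ (k - 2)) \<longlonglongrightarrow> 1 * 0 ^ (k - 2)"
      by (intro tendsto_intros r1 iL)
    then show "(\<lambda>n. ((1 + H n) / L n) * (1 / L n) ^ (k - 2)) \<longlonglongrightarrow> 0" using k by (simp add: power_0_left)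
  qed
  have t2: "(\<lambda>n. (Aseq k n - H n ^ k / fact k) / L n ^ (k - 1)) \<longlonglongrightarrow> 0"
  proof (rule Lim_null_comparison)
    show "\<forall>\<^sub>F n in sequentially. norm ((Aseq k n - H n ^ k / fact k) / L n ^ (k - 1)) \<le> C * ((1 + H n) / L n) ^ (k - 2) * (1 / L n)"
      using Lpos
    proof eventually_elim
      case (elim n)
      have "norm ((Aseq k n - H n ^ k / fact k) / L n ^ (k - 1)) \<le> C * (1 + H n) ^ (k - 2) / L n ^ (k - 1)"
        using elim C(2)[of n] by (simp add: abs_divide divide_right_mono)
      also have "\<dots> = C * ((1 + H n) / L n) ^ (k - 2) * (1 / L n)"
      proof -
        have "k - 1 = Suc (k - 2)" using k by simp
        then show ?thesis using elim by (simp add: power_divide field_simps)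
      qed
      finally show ?case .
    qed
    have "(\<lambda>n. C * ((1 + H n) / L n) ^ (k - 2) * (1 / L n)) \<longlonglongrightarrow> C * 1 ^ (k - 2) * 0"
      by (intro tendsto_intros r1 iL)
    then show "(\<lambda>n. C * ((1 + H n) / L n) ^ (k - 2) * (1 / L n)) \<longlonglongrightarrow> 0" by simp
  qed
  have t3: "(\<lambda>n. ((H n - L n) * (\<Sum>i<k. ((0 + H n) / L n) ^ i) - real k * euler_mascheroni) / fact k)
            \<longlonglongrightarrow> (euler_mascheroni * (\<Sum>i<k. 1 ^ i) - real k * euler_mascheroni) / fact k"
    by (intro tendsto_intros HL r0) auto
  have t3': "(\<lambda>n. ((H n - L n) * (\<Sum>i<k. ((0 + H n) / L n) ^ i) - real k * euler_mascheroni) / fact k) \<longlonglongrightarrow> 0"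
    using t3 by simp
  have "(\<lambda>n. (f n - Aseq k n) / L n ^ (k - 1) + (Aseq k n - H n ^ k / fact k) / L n ^ (k - 1)
          + ((H n - L n) * (\<Sum>i<k. ((0 + H n) / L n) ^ i) - real k * euler_mascheroni) / fact k) \<longlonglongrightarrow> 0 + 0 + 0"
    by (intro tendsto_add t1 t2 t3')
  then have "(\<lambda>n. (f n - Aseq k n) / L n ^ (k - 1) + (Aseq k n - H n ^ k / fact k) / L n ^ (k - 1)
          + ((H n - L n) * (\<Sum>i<k. ((0 + H n) / L n) ^ i) - real k * euler_mascheroni) / fact k) \<longlonglongrightarrow> 0"
    by simp
  then show "(\<lambda>n. (f n - ln (real n) ^ k / fact k - euler_mascheroni * ln (real n) ^ (k - 1) / fact (k - 1))
           / ln (real n) ^ (k - 1)) \<longlonglongrightarrow> 0"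
  proof (rule Lim_transform_eventually)
    show "\<forall>\<^sub>F n in sequentially. (f n - Aseq k n) / L n ^ (k - 1) + (Aseq k n - H n ^ k / fact k) / L n ^ (k - 1)
          + ((H n - L n) * (\<Sum>i<k. ((0 + H n) / L n) ^ i) - real k * euler_mascheroni) / fact k
          = (f n - ln (real n) ^ k / fact k - euler_mascheroni * ln (real n) ^ (k - 1) / fact (k - 1)) / ln (real n) ^ (k - 1)"
      using Lpos
    proof eventually_elim
      case (elim n)
      have Ln: "L n \<noteq> 0" using elim by simp
      have sumeq: "(H n - L n) * (\<Sum>i<k. ((0 + H n) / L n) ^ i) = (H n ^ k - L n ^ k) / L n ^ (k - 1)"
      proof -
        have "H n ^ k - L n ^ k = (H n - L n) * (\<Sum>i<k. L n ^ (k - Suc i) * H n ^ i)"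
          by (rule power_diff_sumr2)
        moreover have "(\<Sum>i<k. L n ^ (k - Suc i) * H n ^ i) / L n ^ (k - 1) = (\<Sum>i<k. (H n / L n) ^ i)"
          unfolding sum_divide_distrib
        proof (intro sum.cong refl)
          fix i assume "i \<in> {..<k}"
          then have "k - 1 = (k - Suc i) + i" by auto
          then show "L n ^ (k - Suc i) * H n ^ i / L n ^ (k - 1) = (H n / L n) ^ i"
            using Ln by (simp add: power_add power_divide)
        qed
        ultimately show ?thesis by (simp add: mult_divide_mult_cancel_left_if times_divide_eq_right[symmetric])
      qed
      have fk: "fact k = real k * fact (k - 1)" using fact_reduce[of k, where 'a=real] k by simp
      have fk0: "fact (k - 1) \<noteq> (0::real)" by simp
      have k0: "real k \<noteq> 0" using k by simp
      have P0: "L n ^ (k - 1) \<noteq> 0" using Ln by simp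
      show ?case unfolding sumeq using alg_id[OF fk P0 fk0 k0, of "f n" "Aseq k n" "H n ^ k" "L n ^ k" euler_mascheroni]
        by (simp add: L_def H_def)
    qed
  qed
qed

definition aa :: "nat \<Rightarrow> real \<Rightarrow> real" where "aa n y = real n * (1 - y) ^ (n - 1)"
definition ll :: "real \<Rightarrow> real" where "ll y = - ln y"

lemma aa_nonneg: "y \<le> 1 \<Longrightarrow> aa n y \<ge> 0" by (simp add: aa_def)
lemma ll_nonneg: "0 < y \<Longrightarrow> y \<le> 1 \<Longrightarrow> ll y \<ge> 0" by (simp add: ll_def)

lemma set_nn_if: "(\<integral>\<^sup>+p\<in>{a..b}. ennreal (f p) \<partial>lborel) = (\<integral>\<^sup>+p. ennreal (if a \<le> p \<and> p \<le> b then f p else 0) \<partial>lborel)"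
  by (rule nn_integral_cong) (auto simp: indicator_def)

lemma aa_FTC:
  assumes "0 \<le> w" "w \<le> 1"
  shows "(\<integral>\<^sup>+y. ennreal (if 0 \<le> y \<and> y \<le> w then aa n y else 0) \<partial>lborel) = ennreal (1 - (1 - w) ^ n)"
proof -
  have "(\<integral>\<^sup>+y\<in>{0..w}. ennreal (aa n y) \<partial>lborel) = ennreal ((-((1 - w) ^ n)) - (-((1 - 0) ^ n)))"
  proof (rule nn_integral_FTC_Icc)
    show "aa n \<in> borel_measurable borel" unfolding aa_def by measurable
    show "((\<lambda>y. -((1 - y) ^ n)) has_real_derivative aa n x) (at x)" for x
    proof -
      have d: "((\<lambda>y. 1 - y) has_real_derivative -1) (at x)" by (auto intro!: derivative_eq_intros)
      show ?thesis by (rule DERIV_cong[OF DERIV_minus[OF DERIV_power[OF d, of n]]]) (simp add: aa_def)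
    qed
    show "0 \<le> aa n x" if "x \<in> {0..w}" for x using that assms by (simp add: aa_def)
  qed (use assms in auto)
  then show ?thesis unfolding set_nn_if by simp
qed

lemma ll_pow_deriv:
  assumes "x > 0"
  shows "((\<lambda>p. ll p ^ Suc j) has_real_derivative (- real (Suc j) * ll x ^ j / x)) (at x)"
proof -
  have d: "(ll has_real_derivative (- (1 / x))) (at x)"
    unfolding ll_def[abs_def] using assms by (auto intro!: derivative_eq_intros)
  show ?thesis
    by (rule DERIV_cong[OF DERIV_power[OF d, of "Suc j"]]) (simp add: algebra_simps diff_divide_distrib add_divide_distrib)
qed

lemma ll_FTC:
  assumes "0 < y" "y \<le> 1"
  shows "(\<integral>\<^sup>+t. ennreal (if y \<le> t \<and> t \<le> 1 then ll t ^ k / (fact k * t) else 0) \<partial>lborel)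
         = ennreal (ll y ^ Suc k / fact (Suc k))"
proof -
  have "(\<integral>\<^sup>+t\<in>{y..1}. ennreal (ll t ^ k / (fact k * t)) \<partial>lborel)
        = ennreal ((-(ll 1 ^ Suc k) / fact (Suc k)) - (-(ll y ^ Suc k) / fact (Suc k)))"
  proof (rule nn_integral_FTC_Icc)
    show "(\<lambda>t. ll t ^ k / (fact k * t)) \<in> borel_measurable borel" unfolding ll_def by measurable
    show "((\<lambda>t. -(ll t ^ Suc k) / fact (Suc k)) has_real_derivative ll x ^ k / (fact k * x)) (at x)"
      if "x \<in> {y..1}" for x
    proof -
      have x: "x > 0" using that assms by auto
      show ?thesis
      proof (rule DERIV_cong[OF DERIV_cdivide[OF DERIV_minus[OF ll_pow_deriv[OF x, of k]], of "fact (Suc k)"]])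
        have gen: "- (- a * u / x) / (a * F) = u / (F * x)" if "x \<noteq> 0" "F \<noteq> 0" "a \<noteq> 0" for a u F :: real
          using that by (simp add: field_simps)
        show "- (- real (Suc k) * ll x ^ k / x) / fact (Suc k) = ll x ^ k / (fact k * x)"
        proof -
          have fS: "(fact (Suc k)::real) = real (Suc k) * fact k" by simp
          show ?thesis unfolding fS by (rule gen) (use x in auto)
        qed
      qed
    qed
    show "0 \<le> ll x ^ k / (fact k * x)" if "x \<in> {y..1}" for x
      using that assms by (auto simp: ll_def)
  qed (use assms in auto)
  then show ?thesis unfolding set_nn_if by (simp add: ll_def)
qed

definition Fpi :: "nat \<Rightarrow> real \<Rightarrow> real" where
  "Fpi m p = p * (\<Sum>i\<le>m. ll p ^ i / fact i)"

lemma Fpi_deriv: "x > 0 \<Longrightarrow> (Fpi m has_real_derivative pi_dens m x) (at x)"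
proof (induction m)
  case 0
  then show ?case unfolding Fpi_def pi_dens_def by (auto intro!: derivative_eq_intros)
next
  case (Suc m)
  define c :: real where "c = fact (Suc m)"
  have c0: "c \<noteq> 0" by (simp add: c_def)
  have eq: "Fpi (Suc m) = (\<lambda>p. Fpi m p + (p * ll p ^ Suc m) / c)"
    by (auto simp: Fpi_def algebra_simps c_def)
  have d: "((\<lambda>p. p * ll p ^ Suc m) has_real_derivative (1 * ll x ^ Suc m + x * (- real (Suc m) * ll x ^ m / x))) (at x)"
    by (rule DERIV_cong[OF DERIV_mult[OF DERIV_ident ll_pow_deriv[OF Suc.prems, of m]]]) simp
  have "((\<lambda>p. Fpi m p + (p * ll p ^ Suc m) / c) has_real_derivative
        pi_dens m x + (1 * ll x ^ Suc m + x * (- real (Suc m) * ll x ^ m / x)) / c) (at x)"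
    by (intro DERIV_add Suc.IH Suc.prems DERIV_cdivide d)
  moreover have "pi_dens m x + (1 * ll x ^ Suc m + x * (- real (Suc m) * ll x ^ m / x)) / c
        = pi_dens (Suc m) x"
  proof -
    have gen: "u ^ m / F + (1 * (u * u ^ m) + x * (- a * u ^ m / x)) / (a * F) = u * u ^ m / (a * F)"
      if "x \<noteq> 0" "F \<noteq> 0" "a \<noteq> 0" for u F a :: real
      using that by (simp add: field_simps)
    have fS: "c = real (Suc m) * fact m" by (simp add: c_def)
    show ?thesis using gen[of "fact m" "real (Suc m)" "ll x"] Suc.prems
      unfolding fS by (simp add: pi_dens_def ll_def)
  qed
  ultimately show ?case unfolding eq by simp
qed

lemma sum_zero_pow_fact: "(\<Sum>i\<le>m. (0::real) ^ i / fact i) = 1"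
  by (induction m) auto

lemma pi_dens_nonneg: "0 < p \<Longrightarrow> p \<le> 1 \<Longrightarrow> pi_dens m p \<ge> 0"
  by (simp add: pi_dens_def)

lemma pi_mass:
  assumes "0 < x" "x \<le> 1"
  shows "(\<integral>\<^sup>+p. ennreal (if x \<le> p \<and> p \<le> 1 then pi_dens m p else 0) \<partial>lborel) \<le> 1"
proof -
  have "(\<integral>\<^sup>+p\<in>{x..1}. ennreal (pi_dens m p) \<partial>lborel) = ennreal (Fpi m 1 - Fpi m x)"
  proof (rule nn_integral_FTC_Icc)
    show "pi_dens m \<in> borel_measurable borel" unfolding pi_dens_def by measurable
    show "(Fpi m has_real_derivative pi_dens m t) (at t)" if "t \<in> {x..1}" for t
      using that assms by (intro Fpi_deriv) auto
    show "0 \<le> pi_dens m t" if "t \<in> {x..1}" for t using that assms by (intro pi_dens_nonneg) auto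
  qed (use assms in auto)
  moreover have "Fpi m 1 = 1" using sum_zero_pow_fact[of m] by (simp add: Fpi_def ll_def)
  moreover have "Fpi m x \<ge> 0" unfolding Fpi_def using assms
    by (intro mult_nonneg_nonneg sum_nonneg) (auto simp: ll_def)
  ultimately show ?thesis unfolding set_nn_if by simp
qed

lemma M_FTC:
  assumes "0 < x" "x \<le> 1"
  shows "(\<integral>\<^sup>+p. ennreal (if x \<le> p \<and> p \<le> 1 then ln (p / x) / p * pi_dens m p else 0) \<partial>lborel)
         = ennreal (ll x ^ (m + 2) / fact (m + 2))"
proof -
  define L where "L = ll x"
  define c1 :: real where "c1 = fact (Suc m)"
  define c2 :: real where "c2 = fact (Suc (Suc m))"
  define F where "F p = - (L / c1) * ll p ^ Suc m + (real (Suc m) / c2) * ll p ^ Suc (Suc m)" for p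
  have c1: "c1 = real (Suc m) * fact m" by (simp add: c1_def)
  have c2: "c2 = real (Suc (Suc m)) * c1" by (simp add: c2_def c1_def)
  have f0: "fact m \<noteq> (0::real)" by simp
  have "(\<integral>\<^sup>+p\<in>{x..1}. ennreal (ln (p / x) / p * pi_dens m p) \<partial>lborel)
        = ennreal (F 1 - F x)"
  proof (rule nn_integral_FTC_Icc)
    show "(\<lambda>p. ln (p / x) / p * pi_dens m p) \<in> borel_measurable borel" unfolding pi_dens_def by measurable
    show "(F has_real_derivative ln (t / x) / t * pi_dens m t) (at t)"
      if "t \<in> {x..1}" for t
    proof -
      have t: "t > 0" using that assms by auto
      have lnq: "ln (t / x) = L - ll t" using t assms by (simp add: L_def ll_def ln_div)
      have "(F has_real_derivative
          - (L / c1) * (- real (Suc m) * ll t ^ m / t) + (real (Suc m) / c2) * (- real (Suc (Suc m)) * ll t ^ Suc m / t)) (at t)"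
        unfolding F_def[abs_def] by (intro DERIV_add DERIV_cmult ll_pow_deriv t)
      moreover have "- (L / c1) * (- real (Suc m) * ll t ^ m / t) + (real (Suc m) / c2) * (- real (Suc (Suc m)) * ll t ^ Suc m / t)
           = ln (t / x) / t * pi_dens m t"
      proof -
        have pd: "pi_dens m t = ll t ^ m / fact m" by (simp add: pi_dens_def ll_def)
        have gen: "- (L / (a * F)) * (- a * u ^ m / t) + (a / (b * (a * F))) * (- b * (u * u ^ m) / t)
                   = (L - u) / t * (u ^ m / F)"
          if "t \<noteq> 0" "F \<noteq> 0" "a \<noteq> 0" "b \<noteq> 0" for a b u F :: real
          using that by (simp add: field_simps)
        show ?thesis unfolding lnq pd c2 c1 using gen[of "fact m" "real (Suc m)" "real (Suc (Suc m))" "ll t"] t f0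
          by (simp only: power_Suc) simp
      qed
      ultimately show ?thesis by simp
    qed
    show "0 \<le> ln (t / x) / t * pi_dens m t" if "t \<in> {x..1}" for t
      using that assms by (intro mult_nonneg_nonneg divide_nonneg_nonneg pi_dens_nonneg) auto
  qed (use assms in auto)
  moreover have "F 1 - F x = ll x ^ (m + 2) / fact (m + 2)"
  proof -
    have "F 1 - F x = (L / c1) * L ^ Suc m - (real (Suc m) / c2) * L ^ Suc (Suc m)"
      by (simp add: F_def L_def ll_def)
    also have "\<dots> = L ^ Suc (Suc m) / c2"
    proof -
      have gen: "(L / (a * F)) * (L * L ^ m) - (a / ((a + 1) * (a * F))) * (L * (L * L ^ m)) = L * (L * L ^ m) / ((a + 1) * (a * F))"
        if "F \<noteq> 0" "a \<noteq> 0" "a + 1 \<noteq> 0" for a F :: real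
      proof -
        have D: "(a + 1) * (a * F) \<noteq> 0" using that by simp
        have "(L / (a * F)) * (L * L ^ m) = (a + 1) * (L * (L * L ^ m)) / ((a + 1) * (a * F))"
          using that by simp
        moreover have "(a / ((a + 1) * (a * F))) * (L * (L * L ^ m)) = a * (L * (L * L ^ m)) / ((a + 1) * (a * F))"
          by simp
        ultimately show ?thesis by (simp add: diff_divide_distrib[symmetric] algebra_simps)
      qed
      show ?thesis unfolding c2 c1 using gen[of "fact m" "real (Suc m)"] f0
        by (simp only: power_Suc of_nat_Suc[of "Suc m"]) simp
    qed
    finally show ?thesis by (simp add: L_def c2_def numeral_2_eq_2)
  qed
  ultimately show ?thesis unfolding set_nn_if by simp
qed

definition Nf :: "real \<Rightarrow> real \<Rightarrow> real" where
  "Nf p x = (if 0 < p \<and> p < 1 \<and> 0 < x \<and> x \<le> p then real (nat \<lfloor>ln (p / x) / - ln (1 - p)\<rfloor> + 1) else 0)"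

lemma Nf_meas[measurable]: "(\<lambda>(p, x). Nf p x) \<in> borel_measurable (lborel \<Otimes>\<^sub>M lborel)"
  unfolding Nf_def by measurable

lemma Nf_meas1[measurable]: "(\<lambda>p. Nf p x) \<in> borel_measurable lborel"
  unfolding Nf_def by measurable

lemma Nf_nonneg: "Nf p x \<ge> 0" by (simp add: Nf_def)

lemma pow_le_iff_floor:
  fixes p x :: real
  assumes p: "0 < p" "p < 1" and x: "0 < x" "x \<le> p"
  shows "x \<le> p * (1 - p) ^ i \<longleftrightarrow> i \<le> nat \<lfloor>ln (p / x) / - ln (1 - p)\<rfloor>"
proof -
  define z where "z = ln (p / x) / - ln (1 - p)"
  have lr: "ln (1 - p) < 0" using p by simp
  have z0: "z \<ge> 0" unfolding z_def using p x lr by (intro divide_nonneg_pos) auto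
  have pr: "0 < p * (1 - p) ^ i" using p by simp
  have "x \<le> p * (1 - p) ^ i \<longleftrightarrow> ln x \<le> ln (p * (1 - p) ^ i)"
    using x pr by simp
  also have "ln (p * (1 - p) ^ i) = ln p + real i * ln (1 - p)"
    using p by (simp add: ln_mult ln_realpow)
  also have "ln x \<le> ln p + real i * ln (1 - p) \<longleftrightarrow> real i * (- ln (1 - p)) \<le> ln (p / x)"
    using p x by (simp add: ln_div algebra_simps)
  also have "\<dots> \<longleftrightarrow> real i \<le> z"
  proof -
    have c: "0 < - ln (1 - p)" using lr by simp
    show ?thesis unfolding z_def using pos_le_divide_eq[OF c, of "real i" "ln (p / x)"] by simp
  qed
  also have "\<dots> \<longleftrightarrow> int i \<le> \<lfloor>z\<rfloor>" by (simp add: le_floor_iff)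
  also have "\<dots> \<longleftrightarrow> i \<le> nat \<lfloor>z\<rfloor>" using z0 by (simp add: le_nat_iff)
  finally show ?thesis unfolding z_def .
qed

lemma card_eq_Nf:
  fixes p x :: real
  assumes p: "0 < p" "p < 1" and x: "0 < x"
  shows "real (card {j::nat. j \<ge> 1 \<and> p * (1 - p) ^ (j - 1) \<ge> x}) = Nf p x"
proof (cases "x \<le> p")
  case True
  define K where "K = nat \<lfloor>ln (p / x) / - ln (1 - p)\<rfloor>"
  have "{j::nat. j \<ge> 1 \<and> p * (1 - p) ^ (j - 1) \<ge> x} = {1..K+1}"
  proof (intro set_eqI iffI)
    fix j assume "j \<in> {j::nat. j \<ge> 1 \<and> p * (1 - p) ^ (j - 1) \<ge> x}"
    then have "j \<ge> 1" "j - 1 \<le> K" using pow_le_iff_floor[OF p x True, of "j - 1"] by (auto simp: K_def)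
    then show "j \<in> {1..K+1}" by simp
  next
    fix j assume "j \<in> {1..K+1}"
    then have "j \<ge> 1" "j - 1 \<le> K" by auto
    then show "j \<in> {j::nat. j \<ge> 1 \<and> p * (1 - p) ^ (j - 1) \<ge> x}"
      using pow_le_iff_floor[OF p x True, of "j - 1"] by (auto simp: K_def)
  qed
  then show ?thesis using p x True by (simp add: Nf_def K_def)
next
  case False
  have E: "{j::nat. j \<ge> 1 \<and> p * (1 - p) ^ (j - 1) \<ge> x} = {}"
  proof -
    have "p * (1 - p) ^ i \<le> p" for i
      using p by (intro mult_left_le power_le_one) auto
    then show ?thesis using False by (auto simp: not_le intro: order.strict_trans1)
  qed
  show ?thesis unfolding E using False by (simp add: Nf_def)
qed

lemma Nf_bounds:
  fixes p x :: real
  assumes p: "0 < p" "p < 1" and x: "0 < x" "x < 1"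
  shows "Nf p x \<le> (if x \<le> p then ln (p / x) / p + 1 else 0)"
    and "(if x \<le> p then ln (p / x) / p else 0) \<le> Nf p x + (if x \<le> p then ll x else 0)"
proof -
  define z where "z = ln (p / x) / - ln (1 - p)"
  have lr: "- ln (1 - p) > 0" using p by simp
  have lr1: "- ln (1 - p) \<ge> p" using ln_le_minus_one[of "1 - p"] p by simp
  have lr2: "- ln (1 - p) \<le> p / (1 - p)"
  proof -
    have "ln (1 / (1 - p)) \<le> 1 / (1 - p) - 1" using p by (intro ln_le_minus_one) auto
    moreover have "ln (1 / (1 - p)) = - ln (1 - p)" using p by (simp add: ln_div)
    moreover have "1 / (1 - p) - 1 = p / (1 - p)" using p by (simp add: field_simps)
    ultimately show ?thesis by simp
  qed
  show "Nf p x \<le> (if x \<le> p then ln (p / x) / p + 1 else 0)"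
  proof (cases "x \<le> p")
    case True
    have q0: "ln (p / x) \<ge> 0" using True x by simp
    have z0: "z \<ge> 0" unfolding z_def using q0 lr by (intro divide_nonneg_pos) auto
    have "real (nat \<lfloor>z\<rfloor>) = real_of_int \<lfloor>z\<rfloor>" using z0 by simp
    then have "real (nat \<lfloor>z\<rfloor>) \<le> z" by simp
    also have "z \<le> ln (p / x) / p" unfolding z_def using lr1 q0 p by (intro divide_left_mono mult_pos_pos) auto
    finally show ?thesis using True p x by (simp add: Nf_def z_def)
  qed (simp add: Nf_def)
  show "(if x \<le> p then ln (p / x) / p else 0) \<le> Nf p x + (if x \<le> p then ll x else 0)"
  proof (cases "x \<le> p")
    case True
    have q0: "ln (p / x) \<ge> 0" using True x by simp
    have qL: "ln (p / x) \<le> ll x" using p x by (simp add: ll_def ln_div)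
    have "ln (p / x) / p - ln (p / x) = ln (p / x) / (p / (1 - p))" using p by (simp add: field_simps)
    also have "\<dots> \<le> z" unfolding z_def using lr lr2 q0 p by (intro divide_left_mono mult_pos_pos) auto
    also have "z \<le> real (nat \<lfloor>z\<rfloor>) + 1"
    proof -
      have "z < real_of_int \<lfloor>z\<rfloor> + 1" by linarith
      moreover have "z \<ge> 0" unfolding z_def using q0 lr by (intro divide_nonneg_pos) auto
      ultimately show ?thesis by linarith
    qed
    finally show ?thesis using True p x qL by (simp add: Nf_def z_def)
  qed (simp add: Nf_def)
qed

lemma pi_dens_meas[measurable]: "pi_dens m \<in> borel_measurable borel"
  unfolding pi_dens_def by measurable

definition nuE :: "nat \<Rightarrow> real \<Rightarrow> ennreal" where
  "nuE m x = (\<integral>\<^sup>+p. ennreal (if 0 < p \<and> p < 1 then Nf p x * pi_dens m p else 0) \<partial>lborel)"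

lemma nu_arrow_eq:
  assumes x: "0 < x" "x < 1"
  shows "nu_arrow m x = enn2real (nuE m x)"
proof -
  have fe: "(\<lambda>p. indicator {0<..<1} p *\<^sub>R (real (card {j::nat. j \<ge> 1 \<and> p * (1 - p) ^ (j - 1) \<ge> x}) * pi_dens m p))
      = (\<lambda>p. if 0 < p \<and> p < 1 then Nf p x * pi_dens m p else 0)"
  proof (rule ext)
    fix p
    show "indicator {0<..<1} p *\<^sub>R (real (card {j::nat. j \<ge> 1 \<and> p * (1 - p) ^ (j - 1) \<ge> x}) * pi_dens m p)
      = (if 0 < p \<and> p < 1 then Nf p x * pi_dens m p else 0)"
    proof (cases "0 < p \<and> p < 1")
      case True
      then show ?thesis using card_eq_Nf[of p x] x by (simp add: indicator_def)
    qed (auto simp: indicator_def)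
  qed
  have "nu_arrow m x = integral\<^sup>L lborel (\<lambda>p. if 0 < p \<and> p < 1 then Nf p x * pi_dens m p else 0)"
    unfolding nu_arrow_def set_lebesgue_integral_def fe ..
  also have "\<dots> = enn2real (nuE m x)"
    unfolding nuE_def
  proof (rule integral_eq_nn_integral)
    show "(\<lambda>p. if 0 < p \<and> p < 1 then Nf p x * pi_dens m p else 0) \<in> borel_measurable lborel"
      unfolding pi_dens_def by measurable
    show "AE p in lborel. 0 \<le> (if 0 < p \<and> p < 1 then Nf p x * pi_dens m p else 0)"
      by (auto intro!: mult_nonneg_nonneg Nf_nonneg pi_dens_nonneg)
  qed
  finally show ?thesis .
qed

lemma nuE_upper:
  assumes x: "0 < x" "x < 1"
  shows "nuE m x \<le> ennreal (ll x ^ (m + 2) / fact (m + 2) + 1)"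
proof -
  define A where "A p = (if x \<le> p \<and> p \<le> 1 then ln (p / x) / p * pi_dens m p else 0)" for p
  define B where "B p = (if x \<le> p \<and> p \<le> 1 then pi_dens m p else 0)" for p
  have A0: "A p \<ge> 0" for p using x unfolding A_def
    by (auto intro!: mult_nonneg_nonneg divide_nonneg_nonneg pi_dens_nonneg)
  have B0: "B p \<ge> 0" for p using x unfolding B_def by (auto intro!: pi_dens_nonneg)
  have "nuE m x \<le> (\<integral>\<^sup>+p. ennreal (A p) + ennreal (B p) \<partial>lborel)"
    unfolding nuE_def
  proof (intro nn_integral_mono)
    fix p
    have "(if 0 < p \<and> p < 1 then Nf p x * pi_dens m p else 0) \<le> A p + B p"
    proof (cases "0 < p \<and> p < 1")
      case True
      have pd: "pi_dens m p \<ge> 0" using True by (intro pi_dens_nonneg) auto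
      have nb: "Nf p x \<le> (if x \<le> p then ln (p / x) / p + 1 else 0)"
        using Nf_bounds(1)[of p x] True x by auto
      show ?thesis
      proof (cases "x \<le> p")
        case True2: True
        have "Nf p x * pi_dens m p \<le> (ln (p / x) / p + 1) * pi_dens m p"
          using nb True2 pd by (intro mult_right_mono) auto
        then show ?thesis using True True2 by (simp add: A_def B_def algebra_simps)
      next
        case False
        then have "Nf p x \<le> 0" using nb by simp
        then have "Nf p x * pi_dens m p \<le> 0" using pd by (simp add: mult_nonpos_nonneg)
        then show ?thesis using True A0[of p] B0[of p] by simp
      qed
    qed (use A0 B0 in \<open>auto simp: add_nonneg_nonneg\<close>)
    then show "ennreal (if 0 < p \<and> p < 1 then Nf p x * pi_dens m p else 0) \<le> ennreal (A p) + ennreal (B p)"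
      using A0[of p] B0[of p] by (simp add: ennreal_plus[symmetric] del: ennreal_plus)
  qed
  also have "\<dots> = (\<integral>\<^sup>+p. ennreal (A p) \<partial>lborel) + (\<integral>\<^sup>+p. ennreal (B p) \<partial>lborel)"
    by (rule nn_integral_add) (unfold A_def B_def, measurable)+
  also have "(\<integral>\<^sup>+p. ennreal (A p) \<partial>lborel) = ennreal (ll x ^ (m + 2) / fact (m + 2))"
    unfolding A_def using x by (intro M_FTC) auto
  also have "(\<integral>\<^sup>+p. ennreal (B p) \<partial>lborel) \<le> 1"
    unfolding B_def using x by (intro pi_mass) auto
  finally have "nuE m x \<le> ennreal (ll x ^ (m + 2) / fact (m + 2)) + 1" by simp
  moreover have "ennreal (ll x ^ (m + 2) / fact (m + 2)) + 1 = ennreal (ll x ^ (m + 2) / fact (m + 2) + 1)"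
    using x ll_nonneg[of x] by (subst ennreal_plus) auto
  ultimately show ?thesis by simp
qed

lemma nuE_lower:
  assumes x: "0 < x" "x < 1"
  shows "ennreal (ll x ^ (m + 2) / fact (m + 2)) \<le> nuE m x + ennreal (ll x)"
proof -
  define A where "A p = (if x \<le> p \<and> p \<le> 1 then ln (p / x) / p * pi_dens m p else 0)" for p
  define B where "B p = (if x \<le> p \<and> p \<le> 1 then pi_dens m p else 0)" for p
  define N where "N p = (if 0 < p \<and> p < 1 then Nf p x * pi_dens m p else 0)" for p
  have lx: "ll x \<ge> 0" using x by (intro ll_nonneg) auto
  have B0: "B p \<ge> 0" for p using x unfolding B_def by (auto intro!: pi_dens_nonneg)
  have N0: "N p \<ge> 0" for p unfolding N_def by (auto intro!: mult_nonneg_nonneg Nf_nonneg pi_dens_nonneg)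
  have "ennreal (ll x ^ (m + 2) / fact (m + 2)) = (\<integral>\<^sup>+p. ennreal (A p) \<partial>lborel)"
    unfolding A_def using x by (intro M_FTC[symmetric]) auto
  also have "\<dots> \<le> (\<integral>\<^sup>+p. ennreal (N p) + ennreal (ll x) * ennreal (B p) \<partial>lborel)"
  proof (intro nn_integral_mono)
    fix p
    have "A p \<le> N p + ll x * B p"
    proof (cases "x \<le> p \<and> p \<le> 1")
      case True
      have pd: "pi_dens m p \<ge> 0" using True x by (intro pi_dens_nonneg) auto
      show ?thesis
      proof (cases "p = 1")
        case True2: True
        have "N p = 0" by (simp add: N_def True2)
        then show ?thesis using True True2 x by (simp add: A_def B_def ll_def ln_div)
      next
        case False
        then have p: "0 < p" "p < 1" using True x by auto
        have "ln (p / x) / p \<le> Nf p x + ll x" using Nf_bounds(2)[OF p x] True by simp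
        then have "ln (p / x) / p * pi_dens m p \<le> (Nf p x + ll x) * pi_dens m p"
          using pd by (intro mult_right_mono) auto
        then show ?thesis using True p by (simp add: A_def B_def N_def algebra_simps)
      qed
    next
      case False
      then show ?thesis using N0[of p] B0[of p] lx by (auto simp: A_def intro!: add_nonneg_nonneg mult_nonneg_nonneg)
    qed
    then show "ennreal (A p) \<le> ennreal (N p) + ennreal (ll x) * ennreal (B p)"
      using N0[of p] B0[of p] lx
      by (simp add: ennreal_plus[symmetric] ennreal_mult[symmetric] del: ennreal_plus)
  qed
  also have "\<dots> = (\<integral>\<^sup>+p. ennreal (N p) \<partial>lborel) + ennreal (ll x) * (\<integral>\<^sup>+p. ennreal (B p) \<partial>lborel)"
  proof -
    have "(\<integral>\<^sup>+p. ennreal (N p) + ennreal (ll x) * ennreal (B p) \<partial>lborel)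
          = (\<integral>\<^sup>+p. ennreal (N p) \<partial>lborel) + (\<integral>\<^sup>+p. ennreal (ll x) * ennreal (B p) \<partial>lborel)"
      by (rule nn_integral_add) (unfold N_def B_def, measurable)+
    also have "(\<integral>\<^sup>+p. ennreal (ll x) * ennreal (B p) \<partial>lborel) = ennreal (ll x) * (\<integral>\<^sup>+p. ennreal (B p) \<partial>lborel)"
      by (rule nn_integral_cmult) (unfold B_def, measurable)
    finally show ?thesis .
  qed
  also have "(\<integral>\<^sup>+p. ennreal (N p) \<partial>lborel) = nuE m x" unfolding N_def nuE_def ..
  also have "ennreal (ll x) * (\<integral>\<^sup>+p. ennreal (B p) \<partial>lborel) \<le> ennreal (ll x) * 1"
    unfolding B_def using x by (intro mult_left_mono pi_mass) auto
  finally show ?thesis by simp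
qed

lemma nu_bounds:
  assumes x: "0 < x" "x < 1"
  shows "ll x ^ (m + 2) / fact (m + 2) - ll x \<le> nu_arrow m x"
    and "nu_arrow m x \<le> ll x ^ (m + 2) / fact (m + 2) + 1"
proof -
  define c where "c = ll x ^ (m + 2) / fact (m + 2)"
  have lx: "ll x \<ge> 0" using x by (intro ll_nonneg) auto
  have c0: "c \<ge> 0" using lx by (simp add: c_def)
  have up: "nuE m x \<le> ennreal (c + 1)" unfolding c_def by (rule nuE_upper[OF x])
  have fin: "nuE m x < top" by (rule order.strict_trans1[OF up ennreal_less_top])
  obtain v where v: "nuE m x = ennreal v" "v \<ge> 0"
    using fin by (cases "nuE m x" rule: ennreal_cases) auto
  have nu: "nu_arrow m x = v" using nu_arrow_eq[OF x, of m] v by simp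
  have "v \<le> c + 1" using up c0 unfolding v(1) by (subst (asm) ennreal_le_iff) auto
  then show "nu_arrow m x \<le> ll x ^ (m + 2) / fact (m + 2) + 1" using nu c_def by simp
  have "ennreal c \<le> ennreal v + ennreal (ll x)" using nuE_lower[OF x, of m] v unfolding c_def by simp
  also have "\<dots> = ennreal (v + ll x)" using v lx by (subst ennreal_plus) auto
  finally have "c \<le> v + ll x" using v lx by (subst (asm) ennreal_le_iff) auto
  then show "ll x ^ (m + 2) / fact (m + 2) - ll x \<le> nu_arrow m x" using nu c_def by simp
qed

lemma pmf_geom1:
  assumes p: "0 < p" "p < 1"
  shows "pmf (geom1_pmf p) j = (if j = 0 then 0 else p * (1 - p) ^ (j - 1))"
proof (cases j)
  case 0
  then show ?thesis unfolding geom1_pmf_def by (auto intro!: pmf_map_outside)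
next
  case (Suc i)
  have "pmf (map_pmf Suc (geometric_pmf p)) (Suc i) = pmf (geometric_pmf p) i"
    by (rule pmf_map_inj') simp
  then show ?thesis using p Suc unfolding geom1_pmf_def by (simp add: mult.commute)
qed

lemma emeasure_not_in_rep:
  "emeasure (measure_pmf (replicate_pmf n M)) {xs. j \<notin> set xs} = ennreal ((1 - pmf M j) ^ n)"
proof (induction n)
  case 0
  then show ?case by (simp add: indicator_def)
next
  case (Suc n)
  have w: "pmf M j \<le> 1" by (rule pmf_le_1)
  have "emeasure (measure_pmf (replicate_pmf (Suc n) M)) {xs. j \<notin> set xs}
        = (\<integral>\<^sup>+x. (\<integral>\<^sup>+xs. indicator {xs. j \<notin> set xs} (x # xs) \<partial>replicate_pmf n M) \<partial>M)"
    by simp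
  also have "\<dots> = (\<integral>\<^sup>+x. indicator (- {j}) x * emeasure (measure_pmf (replicate_pmf n M)) {xs. j \<notin> set xs} \<partial>M)"
  proof (intro nn_integral_cong)
    fix x
    have "(\<lambda>xs. indicator {xs. j \<notin> set xs} (x # xs) :: ennreal) = (\<lambda>xs. indicator (- {j}) x * indicator {xs. j \<notin> set xs} xs)"
      by (auto simp: indicator_def)
    then show "(\<integral>\<^sup>+xs. indicator {xs. j \<notin> set xs} (x # xs) \<partial>replicate_pmf n M)
               = indicator (- {j}) x * emeasure (measure_pmf (replicate_pmf n M)) {xs. j \<notin> set xs}"
      by (simp add: nn_integral_cmult)
  qed
  also have "\<dots> = emeasure (measure_pmf M) (- {j}) * ennreal ((1 - pmf M j) ^ n)"
    unfolding Suc by (simp add: nn_integral_multc)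
  also have "emeasure (measure_pmf M) (- {j}) = ennreal (1 - pmf M j)"
  proof -
    have "measure_pmf.prob M (- {j}) = 1 - measure_pmf.prob M {j}"
      using measure_pmf.prob_compl[of "{j}" M] by (simp add: Compl_eq_Diff_UNIV)
    then show ?thesis by (simp add: measure_pmf.emeasure_eq_measure measure_pmf_single)
  qed
  finally show ?case using w by (simp add: ennreal_mult[symmetric] pmf_nonneg)
qed

definition Gn :: "nat \<Rightarrow> real \<Rightarrow> ennreal" where
  "Gn n p = (\<integral>\<^sup>+y. ennreal (if 0 < y \<and> y < 1 then aa n y * Nf p y else 0) \<partial>lborel)"

lemma aa_meas[measurable]: "aa n \<in> borel_measurable borel"
  unfolding aa_def by measurable

lemma suminf_indicator_card:
  assumes "finite (S :: nat set)"
  shows "(\<Sum>j. (indicator S j :: ennreal)) = of_nat (card S)"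
proof -
  have "(\<Sum>j. (indicator S j :: ennreal)) = (\<Sum>j\<in>S. indicator S j)"
    by (rule suminf_finite[OF assms]) auto
  also have "\<dots> = (\<Sum>j\<in>S. 1)" by (intro sum.cong) auto
  finally show ?thesis by simp
qed

lemma emeasure_in_rep:
  "emeasure (measure_pmf (replicate_pmf n M)) {xs. j \<in> set xs} = ennreal (1 - (1 - pmf M j) ^ n)"
proof -
  have "measure_pmf.prob (replicate_pmf n M) {xs. j \<in> set xs} = 1 - measure_pmf.prob (replicate_pmf n M) {xs. j \<notin> set xs}"
  proof -
    have "{xs. j \<in> set xs} = UNIV - {xs. j \<notin> set xs}" by auto
    then show ?thesis using measure_pmf.prob_compl[of "{xs. j \<notin> set xs}" "replicate_pmf n M"] by simp
  qed
  moreover have "measure_pmf.prob (replicate_pmf n M) {xs. j \<notin> set xs} = (1 - pmf M j) ^ n"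
    using emeasure_not_in_rep[of n M j] pmf_le_1[of M j]
    by (simp add: measure_pmf.emeasure_eq_measure)
  ultimately show ?thesis by (simp add: measure_pmf.emeasure_eq_measure)
qed

lemma nn_card_rep:
  fixes M :: "nat pmf"
  shows "(\<integral>\<^sup>+xs. ennreal (real (card (set xs))) \<partial>replicate_pmf n M) = (\<Sum>j. ennreal (1 - (1 - pmf M j) ^ n))"
proof -
  have "(\<integral>\<^sup>+xs. ennreal (real (card (set xs))) \<partial>replicate_pmf n M)
        = (\<integral>\<^sup>+xs. (\<Sum>j. indicator {xs. j \<in> set xs} xs) \<partial>replicate_pmf n M)"
  proof (intro nn_integral_cong)
    fix xs :: "nat list"
    have "(\<Sum>j. indicator {xs. j \<in> set xs} xs :: ennreal) = (\<Sum>j. indicator (set xs) j)"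
      by (simp add: indicator_def)
    also have "\<dots> = of_nat (card (set xs))" by (rule suminf_indicator_card) simp
    finally show "ennreal (real (card (set xs))) = (\<Sum>j. indicator {xs. j \<in> set xs} xs)"
      by (simp add: ennreal_of_nat_eq_real_of_nat)
  qed
  also have "\<dots> = (\<Sum>j. \<integral>\<^sup>+xs. indicator {xs. j \<in> set xs} xs \<partial>replicate_pmf n M)"
    by (rule nn_integral_suminf) simp
  also have "\<dots> = (\<Sum>j. ennreal (1 - (1 - pmf M j) ^ n))"
    by (simp add: emeasure_in_rep)
  finally show ?thesis .
qed

lemma term_integral:
  assumes "0 \<le> w" "w < 1"
  shows "ennreal (1 - (1 - w) ^ n) = (\<integral>\<^sup>+y. ennreal (if 0 < y \<and> y < 1 \<and> y \<le> w then aa n y else 0) \<partial>lborel)"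
proof -
  have "ennreal (1 - (1 - w) ^ n) = (\<integral>\<^sup>+y. ennreal (if 0 \<le> y \<and> y \<le> w then aa n y else 0) \<partial>lborel)"
    using assms by (intro aa_FTC[symmetric]) auto
  also have "\<dots> = (\<integral>\<^sup>+y. ennreal (if 0 < y \<and> y < 1 \<and> y \<le> w then aa n y else 0) \<partial>lborel)"
  proof (rule nn_integral_cong_AE)
    show "AE y in lborel. ennreal (if 0 \<le> y \<and> y \<le> w then aa n y else 0) = ennreal (if 0 < y \<and> y < 1 \<and> y \<le> w then aa n y else 0)"
      using AE_lborel_singleton[of 0] by eventually_elim (use assms in auto)
  qed
  finally show ?thesis .
qed

lemma finite_S:
  fixes p y :: real
  assumes p: "0 < p" "p < 1" and y: "0 < y"
  shows "finite {j::nat. j \<ge> 1 \<and> p * (1 - p) ^ (j - 1) \<ge> y}"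
proof (cases "y \<le> p")
  case True
  have "{j::nat. j \<ge> 1 \<and> p * (1 - p) ^ (j - 1) \<ge> y} \<subseteq> {..nat \<lfloor>ln (p / y) / - ln (1 - p)\<rfloor> + 1}"
    using pow_le_iff_floor[OF p y True] by auto
  then show ?thesis by (rule finite_subset) simp
next
  case False
  have "p * (1 - p) ^ i \<le> p" for i using p by (intro mult_left_le power_le_one) auto
  then have E: "{j::nat. j \<ge> 1 \<and> p * (1 - p) ^ (j - 1) \<ge> y} = {}" using False by (auto intro: order.trans)
  show ?thesis unfolding E by simp
qed

lemma EK_cond_Gn:
  assumes p: "0 < p" "p < 1"
  shows "ennreal (EK_cond n p) = Gn n p" and "EK_cond n p \<ge> 0"
proof -
  define R where "R = replicate_pmf n (geom1_pmf p)"
  define w where "w j = pmf (geom1_pmf p) j" for j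
  have w: "0 \<le> w j" "w j < 1" for j
  proof -
    show "0 \<le> w j" by (simp add: w_def)
    have "p * (1 - p) ^ (j - 1) \<le> p" using p by (intro mult_left_le power_le_one) auto
    then have "w j \<le> p" using p by (simp add: w_def pmf_geom1)
    then show "w j < 1" using p by simp
  qed
  have I: "(\<integral>\<^sup>+xs. ennreal (real (card (set xs))) \<partial>R) = (\<Sum>j. ennreal (1 - (1 - w j) ^ n))"
    unfolding R_def w_def by (rule nn_card_rep)
  also have "\<dots> = (\<Sum>j. \<integral>\<^sup>+y. ennreal (if 0 < y \<and> y < 1 \<and> y \<le> w j then aa n y else 0) \<partial>lborel)"
    using w by (simp add: term_integral)
  also have "\<dots> = (\<integral>\<^sup>+y. (\<Sum>j. ennreal (if 0 < y \<and> y < 1 \<and> y \<le> w j then aa n y else 0)) \<partial>lborel)"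
    by (rule nn_integral_suminf[symmetric]) measurable
  also have "\<dots> = Gn n p"
    unfolding Gn_def
  proof (intro nn_integral_cong)
    fix y :: real
    show "(\<Sum>j. ennreal (if 0 < y \<and> y < 1 \<and> y \<le> w j then aa n y else 0))
          = ennreal (if 0 < y \<and> y < 1 then aa n y * Nf p y else 0)"
    proof (cases "0 < y \<and> y < 1")
      case True
      define S where "S = {j::nat. j \<ge> 1 \<and> p * (1 - p) ^ (j - 1) \<ge> y}"
      have S: "{j. y \<le> w j} = S" using True p by (auto simp: S_def w_def pmf_geom1)
      have fS: "finite S" unfolding S_def using p True by (intro finite_S) auto
      have "(\<Sum>j. ennreal (if 0 < y \<and> y < 1 \<and> y \<le> w j then aa n y else 0))
            = (\<Sum>j. ennreal (aa n y) * indicator S j)"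
        using True S by (intro suminf_cong) (auto simp: indicator_def)
      also have "\<dots> = ennreal (aa n y) * (\<Sum>j. indicator S j)" by (rule ennreal_suminf_cmult)
      also have "\<dots> = ennreal (aa n y) * ennreal (Nf p y)"
        using suminf_indicator_card[OF fS] card_eq_Nf[of p y] p True
        by (simp add: S_def ennreal_of_nat_eq_real_of_nat)
      also have "\<dots> = ennreal (aa n y * Nf p y)"
        using True by (simp add: ennreal_mult aa_nonneg Nf_nonneg)
      finally show ?thesis using True by simp
    qed auto
  qed
  finally have I2: "(\<integral>\<^sup>+xs. ennreal (real (card (set xs))) \<partial>R) = Gn n p" .
  have bound: "(\<integral>\<^sup>+xs. ennreal (real (card (set xs))) \<partial>R) \<le> of_nat n"
  proof -
    have "(\<integral>\<^sup>+xs. ennreal (real (card (set xs))) \<partial>R) \<le> (\<integral>\<^sup>+xs. of_nat n \<partial>R)"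
    proof (rule nn_integral_mono_AE)
      show "AE xs in measure_pmf R. ennreal (real (card (set xs))) \<le> of_nat n"
      proof (subst AE_measure_pmf_iff, intro ballI)
        fix xs assume "xs \<in> set_pmf R"
        then have "length xs = n" by (simp add: R_def set_replicate_pmf)
        then have "card (set xs) \<le> n" using card_length by metis
        then show "ennreal (real (card (set xs))) \<le> of_nat n"
          by (simp add: ennreal_of_nat_eq_real_of_nat)
      qed
    qed
    also have "\<dots> = of_nat n" by (simp add: measure_pmf.emeasure_space_1)
    finally show ?thesis .
  qed
  have E: "EK_cond n p = enn2real (\<integral>\<^sup>+xs. ennreal (real (card (set xs))) \<partial>R)"
    unfolding EK_cond_def R_def by (rule integral_eq_nn_integral) auto
  show "EK_cond n p \<ge> 0" unfolding E by simp
  have fin: "(\<integral>\<^sup>+xs. ennreal (real (card (set xs))) \<partial>R) < top"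
    using bound by (simp add: order.strict_trans1 of_nat_less_top)
  show "ennreal (EK_cond n p) = Gn n p" unfolding E using fin I2 by simp
qed

definition EKE :: "nat \<Rightarrow> nat \<Rightarrow> ennreal" where
  "EKE m n = (\<integral>\<^sup>+y. ennreal (if 0 < y \<and> y < 1 then aa n y else 0) * nuE m y \<partial>lborel)"

lemma Gn_meas[measurable]: "(\<lambda>p. Gn n p) \<in> borel_measurable lborel"
  unfolding Gn_def by measurable

lemma EK_eq: "EK m n = enn2real (EKE m n)"
proof -
  define PU where "PU p = (if 0 < p \<and> p < 1 then pi_dens m p else 0)" for p
  have PU0: "PU p \<ge> 0" for p by (auto simp: PU_def intro!: pi_dens_nonneg)
  have fe: "(\<lambda>p. indicator {0<..<1} p *\<^sub>R (EK_cond n p * pi_dens m p))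
      = (\<lambda>p. if 0 < p \<and> p < 1 then enn2real (Gn n p) * pi_dens m p else 0)"
  proof (rule ext)
    fix p :: real
    show "indicator {0<..<1} p *\<^sub>R (EK_cond n p * pi_dens m p)
      = (if 0 < p \<and> p < 1 then enn2real (Gn n p) * pi_dens m p else 0)"
    proof (cases "0 < p \<and> p < 1")
      case True
      then have "EK_cond n p = enn2real (Gn n p)"
        using EK_cond_Gn[of p n] by (metis enn2real_ennreal)
      then show ?thesis using True by simp
    qed auto
  qed
  have "EK m n = integral\<^sup>L lborel (\<lambda>p. if 0 < p \<and> p < 1 then enn2real (Gn n p) * pi_dens m p else 0)"
    unfolding EK_def set_lebesgue_integral_def fe ..
  also have "\<dots> = enn2real (\<integral>\<^sup>+p. ennreal (if 0 < p \<and> p < 1 then enn2real (Gn n p) * pi_dens m p else 0) \<partial>lborel)"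
    by (rule integral_eq_nn_integral) (auto intro!: mult_nonneg_nonneg pi_dens_nonneg)
  also have "(\<integral>\<^sup>+p. ennreal (if 0 < p \<and> p < 1 then enn2real (Gn n p) * pi_dens m p else 0) \<partial>lborel)
      = (\<integral>\<^sup>+p. ennreal (PU p) * Gn n p \<partial>lborel)"
  proof (intro nn_integral_cong)
    fix p :: real
    show "ennreal (if 0 < p \<and> p < 1 then enn2real (Gn n p) * pi_dens m p else 0) = ennreal (PU p) * Gn n p"
    proof (cases "0 < p \<and> p < 1")
      case True
      have G: "Gn n p = ennreal (EK_cond n p)" "EK_cond n p \<ge> 0" using EK_cond_Gn[of p n] True by auto
      show ?thesis using True G pi_dens_nonneg[of p m]
        by (simp add: PU_def ennreal_mult' mult.commute)
    qed (auto simp: PU_def)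
  qed
  also have "\<dots> = (\<integral>\<^sup>+p. \<integral>\<^sup>+y. ennreal (if 0 < p \<and> p < 1 \<and> 0 < y \<and> y < 1 then pi_dens m p * (aa n y * Nf p y) else 0) \<partial>lborel \<partial>lborel)"
  proof (intro nn_integral_cong)
    fix p :: real
    have "ennreal (PU p) * Gn n p = (\<integral>\<^sup>+y. ennreal (PU p) * ennreal (if 0 < y \<and> y < 1 then aa n y * Nf p y else 0) \<partial>lborel)"
      unfolding Gn_def by (rule nn_integral_cmult[symmetric]) measurable
    also have "\<dots> = (\<integral>\<^sup>+y. ennreal (if 0 < p \<and> p < 1 \<and> 0 < y \<and> y < 1 then pi_dens m p * (aa n y * Nf p y) else 0) \<partial>lborel)"
    proof (intro nn_integral_cong)
      fix y :: real
      show "ennreal (PU p) * ennreal (if 0 < y \<and> y < 1 then aa n y * Nf p y else 0)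
            = ennreal (if 0 < p \<and> p < 1 \<and> 0 < y \<and> y < 1 then pi_dens m p * (aa n y * Nf p y) else 0)"
        using PU0[of p] by (auto simp: PU_def ennreal_mult[symmetric] aa_nonneg Nf_nonneg)
    qed
    finally show "ennreal (PU p) * Gn n p = (\<integral>\<^sup>+y. ennreal (if 0 < p \<and> p < 1 \<and> 0 < y \<and> y < 1 then pi_dens m p * (aa n y * Nf p y) else 0) \<partial>lborel)" .
  qed
  also have "\<dots> = (\<integral>\<^sup>+y. \<integral>\<^sup>+p. ennreal (if 0 < p \<and> p < 1 \<and> 0 < y \<and> y < 1 then pi_dens m p * (aa n y * Nf p y) else 0) \<partial>lborel \<partial>lborel)"
    by (rule lborel_pair.Fubini'[symmetric]) measurable
  also have "\<dots> = EKE m n"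
    unfolding EKE_def
  proof (intro nn_integral_cong)
    fix y :: real
    have "ennreal (if 0 < y \<and> y < 1 then aa n y else 0) * nuE m y
          = (\<integral>\<^sup>+p. ennreal (if 0 < y \<and> y < 1 then aa n y else 0) * ennreal (if 0 < p \<and> p < 1 then Nf p y * pi_dens m p else 0) \<partial>lborel)"
      unfolding nuE_def by (rule nn_integral_cmult[symmetric]) measurable
    also have "\<dots> = (\<integral>\<^sup>+p. ennreal (if 0 < p \<and> p < 1 \<and> 0 < y \<and> y < 1 then pi_dens m p * (aa n y * Nf p y) else 0) \<partial>lborel)"
    proof (intro nn_integral_cong)
      fix p :: real
      show "ennreal (if 0 < y \<and> y < 1 then aa n y else 0) * ennreal (if 0 < p \<and> p < 1 then Nf p y * pi_dens m p else 0)
         = ennreal (if 0 < p \<and> p < 1 \<and> 0 < y \<and> y < 1 then pi_dens m p * (aa n y * Nf p y) else 0)"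
        by (auto simp: ennreal_mult[symmetric] aa_nonneg Nf_nonneg pi_dens_nonneg mult_ac)
    qed
    finally show "(\<integral>\<^sup>+p. ennreal (if 0 < p \<and> p < 1 \<and> 0 < y \<and> y < 1 then pi_dens m p * (aa n y * Nf p y) else 0) \<partial>lborel)
       = ennreal (if 0 < y \<and> y < 1 then aa n y else 0) * nuE m y" by simp
  qed
  finally show ?thesis .
qed

definition Aenn :: "nat \<Rightarrow> nat \<Rightarrow> ennreal" where
  "Aenn k n = (\<integral>\<^sup>+y. ennreal (if 0 < y \<and> y < 1 then aa n y * (ll y ^ k / fact k) else 0) \<partial>lborel)"

lemma ll_meas[measurable]: "ll \<in> borel_measurable borel"
  unfolding ll_def by measurable

lemma term_integral2:
  assumes "0 \<le> w" "w \<le> 1"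
  shows "ennreal (1 - (1 - w) ^ n) = (\<integral>\<^sup>+y. ennreal (if 0 < y \<and> y < 1 \<and> y \<le> w then aa n y else 0) \<partial>lborel)"
proof -
  have "ennreal (1 - (1 - w) ^ n) = (\<integral>\<^sup>+y. ennreal (if 0 \<le> y \<and> y \<le> w then aa n y else 0) \<partial>lborel)"
    using assms by (intro aa_FTC[symmetric]) auto
  also have "\<dots> = (\<integral>\<^sup>+y. ennreal (if 0 < y \<and> y < 1 \<and> y \<le> w then aa n y else 0) \<partial>lborel)"
  proof (rule nn_integral_cong_AE)
    show "AE y in lborel. ennreal (if 0 \<le> y \<and> y \<le> w then aa n y else 0) = ennreal (if 0 < y \<and> y < 1 \<and> y \<le> w then aa n y else 0)"
      using AE_lborel_singleton[of 0] AE_lborel_singleton[of 1] by eventually_elim (use assms in auto)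
  qed
  finally show ?thesis .
qed

lemma Aenn_0: assumes "n \<ge> 1" shows "Aenn 0 n = 1"
proof -
  have "Aenn 0 n = (\<integral>\<^sup>+y. ennreal (if 0 < y \<and> y < 1 \<and> y \<le> 1 then aa n y else 0) \<partial>lborel)"
    unfolding Aenn_def by (intro nn_integral_cong) auto
  also have "\<dots> = ennreal (1 - (1 - 1) ^ n)" by (rule term_integral2[symmetric]) auto
  finally show ?thesis using assms by simp
qed

lemma one_minus_pow_sum: "1 - (1 - t) ^ n = t * (\<Sum>j<n. (1 - t) ^ j :: real)"
  by (induction n) (auto simp: algebra_simps)

lemma Aenn_Suc: "Aenn (Suc k) n = (\<Sum>j<n. ennreal (1 / real (Suc j)) * Aenn k (Suc j))"
proof -
  define g where "g t = ll t ^ k / (fact k * t)" for t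
  have "Aenn (Suc k) n = (\<integral>\<^sup>+y. \<integral>\<^sup>+t. ennreal (if 0 < y \<and> y < 1 \<and> y \<le> t \<and> t \<le> 1 then aa n y * g t else 0) \<partial>lborel \<partial>lborel)"
    unfolding Aenn_def
  proof (intro nn_integral_cong)
    fix y :: real
    show "ennreal (if 0 < y \<and> y < 1 then aa n y * (ll y ^ Suc k / fact (Suc k)) else 0)
          = (\<integral>\<^sup>+t. ennreal (if 0 < y \<and> y < 1 \<and> y \<le> t \<and> t \<le> 1 then aa n y * g t else 0) \<partial>lborel)"
    proof (cases "0 < y \<and> y < 1")
      case True
      have "(\<integral>\<^sup>+t. ennreal (if 0 < y \<and> y < 1 \<and> y \<le> t \<and> t \<le> 1 then aa n y * g t else 0) \<partial>lborel)
            = (\<integral>\<^sup>+t. ennreal (aa n y) * ennreal (if y \<le> t \<and> t \<le> 1 then g t else 0) \<partial>lborel)"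
      proof (intro nn_integral_cong)
        fix t :: real
        show "ennreal (if 0 < y \<and> y < 1 \<and> y \<le> t \<and> t \<le> 1 then aa n y * g t else 0)
              = ennreal (aa n y) * ennreal (if y \<le> t \<and> t \<le> 1 then g t else 0)"
        proof (cases "y \<le> t \<and> t \<le> 1")
          case True2: True
          have a0: "aa n y \<ge> 0" using True by (simp add: aa_nonneg)
          have g0: "g t \<ge> 0" using True True2 by (simp add: g_def ll_def)
          show ?thesis using True True2 a0 g0 by (simp add: ennreal_mult)
        qed auto
      qed
      also have "\<dots> = ennreal (aa n y) * (\<integral>\<^sup>+t. ennreal (if y \<le> t \<and> t \<le> 1 then g t else 0) \<partial>lborel)"
        by (rule nn_integral_cmult) (unfold g_def, measurable)
      also have "(\<integral>\<^sup>+t. ennreal (if y \<le> t \<and> t \<le> 1 then g t else 0) \<partial>lborel) = ennreal (ll y ^ Suc k / fact (Suc k))"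
        unfolding g_def using True by (intro ll_FTC) auto
      finally show ?thesis using True by (simp add: ennreal_mult[symmetric] aa_nonneg ll_nonneg)
    next
      case False
      then have "(\<lambda>t. ennreal (if 0 < y \<and> y < 1 \<and> y \<le> t \<and> t \<le> 1 then aa n y * g t else 0)) = (\<lambda>t. 0)"
        by auto
      then show ?thesis using False by auto
    qed
  qed
  also have "\<dots> = (\<integral>\<^sup>+t. \<integral>\<^sup>+y. ennreal (if 0 < y \<and> y < 1 \<and> y \<le> t \<and> t \<le> 1 then aa n y * g t else 0) \<partial>lborel \<partial>lborel)"
    by (rule lborel_pair.Fubini'[symmetric]) (unfold g_def, measurable)
  also have "\<dots> = (\<integral>\<^sup>+t. (\<Sum>j<n. ennreal (if 0 < t \<and> t \<le> 1 then ll t ^ k / fact k * (1 - t) ^ j else 0)) \<partial>lborel)"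
  proof (intro nn_integral_cong)
    fix t :: real
    show "(\<integral>\<^sup>+y. ennreal (if 0 < y \<and> y < 1 \<and> y \<le> t \<and> t \<le> 1 then aa n y * g t else 0) \<partial>lborel)
          = (\<Sum>j<n. ennreal (if 0 < t \<and> t \<le> 1 then ll t ^ k / fact k * (1 - t) ^ j else 0))"
    proof (cases "0 < t \<and> t \<le> 1")
      case True
      have g0: "g t \<ge> 0" using True by (simp add: g_def ll_def)
      have "(\<integral>\<^sup>+y. ennreal (if 0 < y \<and> y < 1 \<and> y \<le> t \<and> t \<le> 1 then aa n y * g t else 0) \<partial>lborel)
            = (\<integral>\<^sup>+y. ennreal (g t) * ennreal (if 0 < y \<and> y < 1 \<and> y \<le> t then aa n y else 0) \<partial>lborel)"
        using True g0 by (intro nn_integral_cong) (auto simp: ennreal_mult[symmetric] aa_nonneg mult.commute)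
      also have "\<dots> = ennreal (g t) * (\<integral>\<^sup>+y. ennreal (if 0 < y \<and> y < 1 \<and> y \<le> t then aa n y else 0) \<partial>lborel)"
        by (rule nn_integral_cmult) measurable
      also have "\<dots> = ennreal (g t) * ennreal (1 - (1 - t) ^ n)"
        using True by (subst term_integral2) auto
      also have "\<dots> = ennreal (g t * (1 - (1 - t) ^ n))"
        using True g0 by (simp add: ennreal_mult power_le_one)
      also have "g t * (1 - (1 - t) ^ n) = (\<Sum>j<n. ll t ^ k / fact k * (1 - t) ^ j)"
        using True unfolding one_minus_pow_sum g_def by (simp add: sum_distrib_left field_simps)
      also have "ennreal (\<Sum>j<n. ll t ^ k / fact k * (1 - t) ^ j) = (\<Sum>j<n. ennreal (ll t ^ k / fact k * (1 - t) ^ j))"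
        using True by (intro sum_ennreal[symmetric]) (auto simp: ll_def)
      finally show ?thesis using True by simp
    next
      case False
      then have "(\<lambda>y. ennreal (if 0 < y \<and> y < 1 \<and> y \<le> t \<and> t \<le> 1 then aa n y * g t else 0)) = (\<lambda>y. 0)"
        by auto
      then show ?thesis using False by auto
    qed
  qed
  also have "\<dots> = (\<Sum>j<n. \<integral>\<^sup>+t. ennreal (if 0 < t \<and> t \<le> 1 then ll t ^ k / fact k * (1 - t) ^ j else 0) \<partial>lborel)"
    by (rule nn_integral_sum) measurable
  also have "\<dots> = (\<Sum>j<n. ennreal (1 / real (Suc j)) * Aenn k (Suc j))"
  proof (intro sum.cong refl)
    fix j assume "j \<in> {..<n}"
    have "ennreal (1 / real (Suc j)) * Aenn k (Suc j)
          = (\<integral>\<^sup>+t. ennreal (1 / real (Suc j)) * ennreal (if 0 < t \<and> t < 1 then aa (Suc j) t * (ll t ^ k / fact k) else 0) \<partial>lborel)"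
      unfolding Aenn_def by (rule nn_integral_cmult[symmetric]) measurable
    also have "\<dots> = (\<integral>\<^sup>+t. ennreal (if 0 < t \<and> t \<le> 1 then ll t ^ k / fact k * (1 - t) ^ j else 0) \<partial>lborel)"
    proof (rule nn_integral_cong_AE)
      show "AE t in lborel. ennreal (1 / real (Suc j)) * ennreal (if 0 < t \<and> t < 1 then aa (Suc j) t * (ll t ^ k / fact k) else 0)
              = ennreal (if 0 < t \<and> t \<le> 1 then ll t ^ k / fact k * (1 - t) ^ j else 0)"
        using AE_lborel_singleton[of 1]
      proof eventually_elim
        case (elim t)
        show ?case
        proof (cases "0 < t \<and> t < 1")
          case True
          then show ?thesis
            by (simp add: ennreal_mult[symmetric] aa_def ll_def field_simps del: of_nat_Suc)
        qed (use elim in auto)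
      qed
    qed
    finally show "(\<integral>\<^sup>+t. ennreal (if 0 < t \<and> t \<le> 1 then ll t ^ k / fact k * (1 - t) ^ j else 0) \<partial>lborel)
          = ennreal (1 / real (Suc j)) * Aenn k (Suc j)" by simp
  qed
  finally show ?thesis .
qed

lemma Aenn_Aseq: "n \<ge> 1 \<Longrightarrow> Aenn k n = ennreal (Aseq k n)"
proof (induction k arbitrary: n)
  case 0
  then show ?case by (simp add: Aenn_0)
next
  case (Suc k)
  have "Aenn (Suc k) n = (\<Sum>j<n. ennreal (1 / real (Suc j)) * ennreal (Aseq k (Suc j)))"
    unfolding Aenn_Suc using Suc.IH by simp
  also have "\<dots> = (\<Sum>j<n. ennreal (Aseq k (Suc j) / real (Suc j)))"
    by (intro sum.cong refl) (simp add: ennreal_mult[symmetric] Aseq_nonneg)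
  also have "\<dots> = ennreal (\<Sum>j<n. Aseq k (Suc j) / real (Suc j))"
    by (rule sum_ennreal) (simp add: Aseq_nonneg)
  also have "(\<Sum>j<n. Aseq k (Suc j) / real (Suc j)) = Aseq (Suc k) n"
    using sum_shift1[of "\<lambda>j. Aseq k j / real j" n] by simp
  finally show ?case .
qed

lemma nuE_meas[measurable]: "(\<lambda>y. nuE m y) \<in> borel_measurable lborel"
  unfolding nuE_def by measurable

lemma EKE_bounds:
  "EKE m n \<le> Aenn (m + 2) n + Aenn 0 n"
  "Aenn (m + 2) n \<le> EKE m n + Aenn 1 n"
proof -
  define c where "c y = ll y ^ (m + 2) / fact (m + 2)" for y
  have "EKE m n \<le> (\<integral>\<^sup>+y. ennreal (if 0 < y \<and> y < 1 then aa n y * (ll y ^ (m + 2) / fact (m + 2)) else 0)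
                     + ennreal (if 0 < y \<and> y < 1 then aa n y * (ll y ^ 0 / fact 0) else 0) \<partial>lborel)"
    unfolding EKE_def
  proof (intro nn_integral_mono)
    fix y :: real
    show "ennreal (if 0 < y \<and> y < 1 then aa n y else 0) * nuE m y
          \<le> ennreal (if 0 < y \<and> y < 1 then aa n y * (ll y ^ (m + 2) / fact (m + 2)) else 0)
            + ennreal (if 0 < y \<and> y < 1 then aa n y * (ll y ^ 0 / fact 0) else 0)"
    proof (cases "0 < y \<and> y < 1")
      case True
      have a0: "aa n y \<ge> 0" using True by (simp add: aa_nonneg)
      have c0: "c y \<ge> 0" using True by (simp add: c_def ll_nonneg)
      have "ennreal (aa n y) * nuE m y \<le> ennreal (aa n y) * ennreal (c y + 1)"
        using nuE_upper[of y m] True unfolding c_def by (intro mult_left_mono) auto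
      also have "\<dots> = ennreal (aa n y * c y) + ennreal (aa n y)"
        using a0 c0 by (simp add: ennreal_mult[symmetric] ennreal_plus[symmetric] algebra_simps del: ennreal_plus)
      finally show ?thesis using True by (simp add: c_def)
    next
      case False
      show ?thesis by (simp only: if_not_P[OF False]) simp
    qed
  qed
  also have "\<dots> = Aenn (m + 2) n + Aenn 0 n"
    unfolding Aenn_def by (rule nn_integral_add) measurable
  finally show "EKE m n \<le> Aenn (m + 2) n + Aenn 0 n" .
  have "Aenn (m + 2) n \<le> (\<integral>\<^sup>+y. ennreal (if 0 < y \<and> y < 1 then aa n y else 0) * nuE m y
                     + ennreal (if 0 < y \<and> y < 1 then aa n y * (ll y ^ 1 / fact 1) else 0) \<partial>lborel)"
    unfolding Aenn_def
  proof (intro nn_integral_mono)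
    fix y :: real
    show "ennreal (if 0 < y \<and> y < 1 then aa n y * (ll y ^ (m + 2) / fact (m + 2)) else 0)
          \<le> ennreal (if 0 < y \<and> y < 1 then aa n y else 0) * nuE m y
            + ennreal (if 0 < y \<and> y < 1 then aa n y * (ll y ^ 1 / fact 1) else 0)"
    proof (cases "0 < y \<and> y < 1")
      case True
      have a0: "aa n y \<ge> 0" using True by (simp add: aa_nonneg)
      have c0: "c y \<ge> 0" using True by (simp add: c_def ll_nonneg)
      have l0: "ll y \<ge> 0" using True by (simp add: ll_nonneg)
      have "ennreal (aa n y * c y) = ennreal (aa n y) * ennreal (c y)"
        using a0 c0 by (simp add: ennreal_mult)
      also have "\<dots> \<le> ennreal (aa n y) * (nuE m y + ennreal (ll y))"
        using nuE_lower[of y m] True unfolding c_def by (intro mult_left_mono) auto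
      also have "\<dots> = ennreal (aa n y) * nuE m y + ennreal (aa n y * ll y)"
        using a0 l0 by (simp add: distrib_left ennreal_mult)
      finally show ?thesis using True by (simp add: c_def)
    next
      case False
      show ?thesis by (simp only: if_not_P[OF False]) simp
    qed
  qed
  also have "\<dots> = EKE m n + Aenn 1 n"
    unfolding Aenn_def EKE_def by (rule nn_integral_add) measurable
  finally show "Aenn (m + 2) n \<le> EKE m n + Aenn 1 n" .
qed

lemma EK_bounds:
  assumes n: "n \<ge> 1"
  shows "Aseq (m + 2) n - harm n \<le> EK m n" "EK m n \<le> Aseq (m + 2) n + 1"
proof -
  have "EKE m n \<le> Aenn (m + 2) n + Aenn 0 n" by (rule EKE_bounds(1))
  also have "\<dots> = ennreal (Aseq (m + 2) n) + ennreal 1" by (simp only: Aenn_Aseq[OF n] Aseq.simps(1) ennreal_1)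
  also have "\<dots> = ennreal (Aseq (m + 2) n + 1)" by (rule ennreal_plus[symmetric]) (simp_all only: Aseq_nonneg zero_le_one)
  finally have up: "EKE m n \<le> ennreal (Aseq (m + 2) n + 1)" .
  have fin: "EKE m n < top" by (rule order.strict_trans1[OF up ennreal_less_top])
  obtain e where e: "EKE m n = ennreal e" "e \<ge> 0"
    using fin by (cases "EKE m n" rule: ennreal_cases) auto
  have EK: "EK m n = e" using EK_eq[of m n] e by simp
  have A0: "Aseq (m + 2) n + 1 \<ge> 0" using Aseq_nonneg[of "m+2" n] by simp
  have "e \<le> Aseq (m + 2) n + 1" using up A0 unfolding e(1) by (subst (asm) ennreal_le_iff) auto
  then show "EK m n \<le> Aseq (m + 2) n + 1" using EK by simp
  have H: "Aenn 1 n = ennreal (harm n)" using Aenn_Aseq[OF n, of 1] unfolding Aseq_1 .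
  have "ennreal (Aseq (m + 2) n) = Aenn (m + 2) n" by (simp only: Aenn_Aseq[OF n])
  also have "\<dots> \<le> EKE m n + Aenn 1 n" by (rule EKE_bounds(2))
  also have "\<dots> = ennreal e + ennreal (harm n)" by (simp only: e(1) H)
  also have "\<dots> = ennreal (e + harm n)" using e harm_nonneg[of n] by (subst ennreal_plus) auto
  finally have "Aseq (m + 2) n \<le> e + harm n"
    using e harm_nonneg[of n, where 'a=real] by (subst (asm) ennreal_le_iff) auto
  then show "Aseq (m + 2) n - harm n \<le> EK m n" using EK by simp
qed

theorem theorem2:
  fixes m :: nat
  assumes "m \<ge> 1"
  shows "(\<lambda>x. nu_arrow m x - (ln (1 / x)) ^ (m + 2) / fact (m + 2))
            \<in> O[at_right 0](\<lambda>x. (ln x) ^ m) \<and>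
         (\<lambda>n. EK m n - (ln (real n)) ^ (m + 2) / fact (m + 2)
                - euler_mascheroni * (ln (real n)) ^ (m + 1) / fact (m + 1))
            \<in> o[at_top](\<lambda>n. (ln (real n)) ^ (m + 1))"
proof
  show "(\<lambda>x. nu_arrow m x - (ln (1 / x)) ^ (m + 2) / fact (m + 2)) \<in> O[at_right 0](\<lambda>x. (ln x) ^ m)"
  proof (rule bigoI[where c = 1])
    have ev: "eventually (\<lambda>x. x \<in> {0<..<exp (- 1)}) (at_right (0::real))"
      by (rule eventually_at_right_real) simp
    show "eventually (\<lambda>x. norm (nu_arrow m x - (ln (1 / x)) ^ (m + 2) / fact (m + 2)) \<le> 1 * norm ((ln x) ^ m)) (at_right 0)"
      using ev
    proof eventually_elim
      case (elim x)
      have e1: "exp (- 1 :: real) < 1" by simp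
      from elim have x0: "0 < x" "x < exp (- 1)" by auto
      have x: "0 < x" "x < 1" using x0 e1 by linarith+
      have L1: "ll x \<ge> 1"
      proof -
        have "ln x \<le> ln (exp (- 1))" using elim x by (subst ln_le_cancel_iff) auto
        then show ?thesis by (simp add: ll_def)
      qed
      have l1x: "ln (1 / x) = ll x" using x by (simp add: ll_def ln_div)
      have b1: "ll x ^ (m + 2) / fact (m + 2) - ll x \<le> nu_arrow m x"
       and b2: "nu_arrow m x \<le> ll x ^ (m + 2) / fact (m + 2) + 1" using nu_bounds[OF x] by auto
      have "\<bar>nu_arrow m x - ll x ^ (m + 2) / fact (m + 2)\<bar> \<le> ll x" using b1 b2 L1 by linarith
      also have "ll x \<le> ll x ^ m" using L1 assms by (metis power_one_right power_increasing)
      also have "ll x ^ m = \<bar>ln x ^ m\<bar>" using L1 by (simp add: ll_def power_abs)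
      finally show ?case unfolding l1x by simp
    qed
  qed
  have k: "m + 2 \<ge> 3" using assms by simp
  have ev1: "eventually (\<lambda>n::nat. n \<ge> 1) sequentially" by (rule eventually_ge_at_top)
  have "(\<lambda>n. EK m n - ln (real n) ^ (m + 2) / fact (m + 2) - euler_mascheroni * ln (real n) ^ (m + 2 - 1) / fact (m + 2 - 1))
           \<in> o(\<lambda>n. ln (real n) ^ (m + 2 - 1))"
  proof (rule final_asymp[OF k])
    show "eventually (\<lambda>n. Aseq (m + 2) n - harm n \<le> EK m n) sequentially"
      using ev1 by eventually_elim (rule EK_bounds)
    show "eventually (\<lambda>n. EK m n \<le> Aseq (m + 2) n + 1) sequentially"
      using ev1 by eventually_elim (rule EK_bounds)
  qed
  then show "(\<lambda>n. EK m n - (ln (real n)) ^ (m + 2) / fact (m + 2)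
                - euler_mascheroni * (ln (real n)) ^ (m + 1) / fact (m + 1))
            \<in> o[at_top](\<lambda>n. (ln (real n)) ^ (m + 1))" by simp
qed

end
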